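(* Let $\gamma_0>-1$, let $\Theta=(-1,+\infty)\times\mathbb{R}\times(0,+\infty)$ and $\theta_0=(\gamma_0,0,1)$. For all $\theta=(\gamma,\mu,\sigma)\in\Theta$, \[ G_{\gamma_0}[\ell_\theta]\leq G_{\gamma_0}[\ell_{\theta_0}], \] with equality if and only if $\theta=\theta_0$. Here $G_{\gamma_0}[f]=\int f\,dG_{\gamma_0}$.
   Context: For $\gamma\in\mathbb{R}$, $G_\gamma$ denotes the generalized extreme value distribution with distribution function $F_\gamma(x)=\exp(-(1+\gamma x)^{-1/\gamma})$ for $1+\gamma x>0$ (interpreted as $\exp(-e^{-x})$ when $\gamma=0$). The GEV log-likelihood is $\ell_\gamma(x)=-(1+1/\gamma)\log(1+\gamma x)-(1+\gamma x)^{-1/\gamma}$ if $1+\gamma x>0$ and $-\infty$ otherwise, with $\ell_0(x)=-x-e^{-x}$; for $\theta=(\gamma,\mu,\sigma)$ with $\sigma>0$, $\ell_\theta(x)=\ell_\gamma\big(\frac{x-\mu}{\sigma}\big)-\log\sigma$ (the log-density of the GEV law with shape $\gamma$, location $\mu$, scale $\sigma$). *)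

theory Defs
  imports "HOL-Analysis.Analysis"
begin

definition gev_cdf :: "real \<Rightarrow> real \<Rightarrow> real" where
  "gev_cdf \<gamma> x =
     (if \<gamma> = 0 then exp (- exp (- x))
      else if 1 + \<gamma> * x > 0 then exp (- ((1 + \<gamma> * x) powr (- 1 / \<gamma>)))
      else if \<gamma> > 0 then 0 else 1)"

definition GEV :: "real \<Rightarrow> real measure" where
  "GEV \<gamma> = interval_measure (gev_cdf \<gamma>)"

definition gev_loglik :: "real \<Rightarrow> real \<Rightarrow> ereal" where
  "gev_loglik \<gamma> x =
     (if \<gamma> = 0 then ereal (- x - exp (- x))
      else if 1 + \<gamma> * x > 0
        then ereal (- (1 + 1 / \<gamma>) * ln (1 + \<gamma> * x) - (1 + \<gamma> * x) powr (- 1 / \<gamma>))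
      else - \<infinity>)"

definition gev_loglik_param :: "real \<times> real \<times> real \<Rightarrow> real \<Rightarrow> ereal" where
  "gev_loglik_param \<theta> x =
     (case \<theta> of (\<gamma>, \<mu>, \<sigma>) \<Rightarrow> gev_loglik \<gamma> ((x - \<mu>) / \<sigma>) - ereal (ln \<sigma>))"

text \<open>Integral of an extended-real-valued function: positive part minus negative part
  (well defined in [-infinity, infinity) whenever the positive part is finite).\<close>
definition ext_integral :: "real measure \<Rightarrow> (real \<Rightarrow> ereal) \<Rightarrow> ereal" where
  "ext_integral M f =
     enn2ereal (\<integral>\<^sup>+ x. e2ennreal (max 0 (f x)) \<partial>M)
     - enn2ereal (\<integral>\<^sup>+ x. e2ennreal (max 0 (- f x)) \<partial>M)"

end

theory Submission imports Defs "HOL-Real_Asymp.Real_Asymp" "HOL-Probability.Distribution_Functions" begin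

definition HH :: "real \<Rightarrow> real \<Rightarrow> real" where
  "HH g y = (if g = 0 then y else ln (1 + g * y) / g)"
definition TT :: "real \<Rightarrow> real \<Rightarrow> real" where
  "TT g y = exp (- HH g y)"
definition dens :: "real \<Rightarrow> real \<Rightarrow> real" where
  "dens g y = (if 1 + g * y > 0 then exp (- (1 + g) * HH g y - TT g y) else 0)"

lemma TT_pos: "TT g y > 0" by (simp add: TT_def)

lemma HH_exp: "1 + g * y > 0 \<Longrightarrow> exp (g * HH g y) = 1 + g * y"
  by (simp add: HH_def)

lemma cdf_in: "1 + g * y > 0 \<Longrightarrow> gev_cdf g y = exp (- TT g y)"
  by (auto simp: gev_cdf_def TT_def HH_def powr_def)

lemma cdf_out: "\<not> 1 + g * y > 0 \<Longrightarrow> gev_cdf g y = (if g > 0 then 0 else 1)"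
  by (auto simp: gev_cdf_def)

lemma loglik_in: "1 + g * y > 0 \<Longrightarrow> gev_loglik g y = ereal (- (1 + g) * HH g y - TT g y)"
  by (auto simp: gev_loglik_def TT_def HH_def powr_def field_simps)

lemma loglik_out: "\<not> 1 + g * y > 0 \<Longrightarrow> gev_loglik g y = - \<infinity>"
  by (auto simp: gev_loglik_def)

lemma DERIV_HH: "1 + g * y > 0 \<Longrightarrow> (HH g has_real_derivative 1 / (1 + g * y)) (at y)"
proof (cases "g = 0")
  case True then show ?thesis unfolding HH_def by simp
next
  case False
  assume p: "1 + g * y > 0"
  have "g*g > 0" using False by (auto simp: zero_less_mult_iff linorder_neq_iff)
  then have "g*g*(1+g*y) > 0" using p by (simp add: mult_pos_pos)
  then have nz: "g * g + g * (g * (g * y)) \<noteq> 0" by (simp add: algebra_simps)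
  have "((\<lambda>y. ln (1 + g * y) / g) has_real_derivative 1 / (1 + g * y)) (at y)"
    using p False nz by (auto intro!: derivative_eq_intros simp: field_simps)
  then show ?thesis using False unfolding HH_def by simp
qed

lemma DERIV_TT: "1 + g * y > 0 \<Longrightarrow> (TT g has_real_derivative - TT g y / (1 + g * y)) (at y)"
proof -
  assume p: "1 + g * y > 0"
  have "((\<lambda>y. - HH g y) has_real_derivative - (1/(1+g*y))) (at y)" using DERIV_HH[OF p] by (rule DERIV_minus)
  from DERIV_chain2[OF DERIV_exp this]
  show ?thesis unfolding TT_def[abs_def] by simp
qed

lemma TT_pow: "1 + g * y > 0 \<Longrightarrow> TT g y / (1 + g * y) = exp (- (1 + g) * HH g y)"
proof -
  assume p: "1 + g * y > 0"
  have "1 + g * y = exp (g * HH g y)" using HH_exp[OF p] by simp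
  then show ?thesis unfolding TT_def
    by (simp add: exp_add[symmetric] exp_diff[symmetric] algebra_simps)
qed

lemma ev_pos: "1 + g * (x::real) > 0 \<Longrightarrow> eventually (\<lambda>x'. 1 + g * x' > 0) (nhds x)"
proof -
  assume a: "1 + g * x > 0"
  have "open {x'::real. 0 < 1 + g * x'}" by (intro open_Collect_less continuous_intros)
  from eventually_nhds_in_open[OF this] a show ?thesis by simp
qed

lemma ev_neg: "1 + g * (x::real) < 0 \<Longrightarrow> eventually (\<lambda>x'. 1 + g * x' < 0) (nhds x)"
proof -
  assume a: "1 + g * x < 0"
  have "open {x'::real. 1 + g * x' < 0}" by (intro open_Collect_less continuous_intros)
  from eventually_nhds_in_open[OF this] a show ?thesis by simp
qed

lemma ev_left_less: "eventually (\<lambda>y. y < x) (at_left (x::real))"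
  unfolding eventually_at_filter by simp

lemma ev_r_pos: "g > 0 \<Longrightarrow> 1 + g * x = 0 \<Longrightarrow> eventually (\<lambda>y. 1 + g * y > 0) (at_right (x::real))"
  by (rule eventually_mono[OF eventually_at_right_less]) (smt (verit) mult_strict_left_mono)
lemma ev_l_neg: "g > 0 \<Longrightarrow> 1 + g * x = 0 \<Longrightarrow> eventually (\<lambda>y. \<not> 1 + g * y > 0) (at_left (x::real))"
  by (rule eventually_mono[OF ev_left_less]) (smt (verit) mult_strict_left_mono)
lemma ev_l_pos: "g < 0 \<Longrightarrow> 1 + g * x = 0 \<Longrightarrow> eventually (\<lambda>y. 1 + g * y > 0) (at_left (x::real))"
  by (rule eventually_mono[OF ev_left_less]) (smt (verit) mult_strict_left_mono_neg)
lemma ev_r_neg: "g < 0 \<Longrightarrow> 1 + g * x = 0 \<Longrightarrow> eventually (\<lambda>y. \<not> 1 + g * y > 0) (at_right (x::real))"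
  by (rule eventually_mono[OF eventually_at_right_less]) (smt (verit) mult_strict_left_mono_neg)

lemma isCont_TT: "1 + g * x > 0 \<Longrightarrow> isCont (TT g) x"
  using DERIV_TT DERIV_isCont by blast

lemma TT_right: "g > 0 \<Longrightarrow> 1 + g * x = 0 \<Longrightarrow> filterlim (TT g) at_top (at_right x)"
proof -
  assume g: "g > 0" and x: "1 + g * x = 0"
  have z: "filterlim (\<lambda>x'. 1 + g * x') (at_right 0) (at_right x)"
    by (rule tendsto_imp_filterlim_at_right) (use x ev_r_pos[OF g x] in \<open>auto intro!: tendsto_eq_intros\<close>)
  have "filterlim (\<lambda>z. exp (- ln z / g)) at_top (at_right 0)" using g by real_asymp
  from filterlim_compose[OF this z]
  have "filterlim (\<lambda>x'. exp (- ln (1 + g * x') / g)) at_top (at_right x)" by simp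
  then show ?thesis using g by (simp add: TT_def[abs_def] HH_def)
qed

lemma TT_left: "g < 0 \<Longrightarrow> 1 + g * x = 0 \<Longrightarrow> filterlim (TT g) (at_right 0) (at_left x)"
proof -
  assume g: "g < 0" and x: "1 + g * x = 0"
  have z: "filterlim (\<lambda>x'. 1 + g * x') (at_right 0) (at_left x)"
    by (rule tendsto_imp_filterlim_at_right) (use x ev_l_pos[OF g x] in \<open>auto intro!: tendsto_eq_intros\<close>)
  have "filterlim (\<lambda>z. exp (- ln z / g)) (at_right 0) (at_right 0)" using g by real_asymp
  from filterlim_compose[OF this z]
  have "filterlim (\<lambda>x'. exp (- ln (1 + g * x') / g)) (at_right 0) (at_left x)" by simp
  then show ?thesis using g by (simp add: TT_def[abs_def] HH_def)
qed

lemma cont_comp: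
  fixes f :: "real \<Rightarrow> real"
  assumes cf: "continuous_on {0<..} f" and l0: "(f \<longlongrightarrow> L0) (at_right 0)" and li: "(f \<longlongrightarrow> Li) at_top"
  shows "isCont (\<lambda>x. if 1 + g * x > 0 then f (TT g x) else if g > 0 then Li else L0) x"
proof -
  let ?F = "\<lambda>x. if 1 + g * x > 0 then f (TT g x) else if g > 0 then Li else L0"
  consider "1 + g * x > 0" | "1 + g * x < 0" | "1 + g * x = 0" by linarith
  then show ?thesis
  proof cases
    case 1
    have A: "isCont (\<lambda>x. f (TT g x)) x"
    proof (rule isCont_o2[OF isCont_TT[OF 1]])
      show "isCont f (TT g x)" using cf TT_pos[of g x]
        by (simp add: continuous_on_eq_continuous_at[OF open_greaterThan])
    qed
    have E: "eventually (\<lambda>x'. ?F x' = f (TT g x')) (nhds x)"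
      using ev_pos[OF 1] by eventually_elim simp
    show ?thesis using isCont_cong[OF E] A by simp
  next
    case 2
    have E: "eventually (\<lambda>x'. ?F x' = (if g > 0 then Li else L0)) (nhds x)"
      using ev_neg[OF 2] by eventually_elim simp
    show ?thesis using isCont_cong[OF E] by simp
  next
    case 3
    then have g0: "g \<noteq> 0" by auto
    show ?thesis
    proof (cases "g > 0")
      case True
      from filterlim_compose[OF li TT_right[OF True 3]]
      have r: "((\<lambda>x'. f (TT g x')) \<longlongrightarrow> Li) (at_right x)" .
      have "eventually (\<lambda>x'. f (TT g x') = ?F x') (at_right x)"
        using ev_r_pos[OF True 3] by eventually_elim simp
      from Lim_transform_eventually[OF r this]
      have R: "(?F \<longlongrightarrow> Li) (at_right x)" .
      have "eventually (\<lambda>x'. Li = ?F x') (at_left x)"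
        using ev_l_neg[OF True 3] by eventually_elim (use True in simp)
      from Lim_transform_eventually[OF tendsto_const this]
      have L: "(?F \<longlongrightarrow> Li) (at_left x)" .
      have "?F x = Li" using 3 True by simp
      then show ?thesis unfolding isCont_def using filterlim_split_at[OF L R] by simp
    next
      case False
      then have gn: "g < 0" using g0 by auto
      from filterlim_compose[OF l0 TT_left[OF gn 3]]
      have r: "((\<lambda>x'. f (TT g x')) \<longlongrightarrow> L0) (at_left x)" .
      have "eventually (\<lambda>x'. f (TT g x') = ?F x') (at_left x)"
        using ev_l_pos[OF gn 3] by eventually_elim simp
      from Lim_transform_eventually[OF r this]
      have L: "(?F \<longlongrightarrow> L0) (at_left x)" .
      have "eventually (\<lambda>x'. L0 = ?F x') (at_right x)"
        using ev_r_neg[OF gn 3] by eventually_elim (use False in simp)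
      from Lim_transform_eventually[OF tendsto_const this]
      have R: "(?F \<longlongrightarrow> L0) (at_right x)" .
      have "?F x = L0" using 3 False by simp
      then show ?thesis unfolding isCont_def using filterlim_split_at[OF L R] by simp
    qed
  qed
qed

lemma cdf_eq: "gev_cdf g = (\<lambda>x. if 1 + g * x > 0 then exp (- TT g x) else if g > 0 then 0 else 1)"
  using cdf_in cdf_out by (auto simp: fun_eq_iff)

lemma isCont_cdf: "isCont (gev_cdf g) x"
proof -
  have "isCont (\<lambda>x. if 1 + g * x > 0 then exp (- TT g x) else if g > 0 then 0 else 1) x"
    by (rule cont_comp) (intro continuous_intros, real_asymp, real_asymp)
  then show ?thesis by (simp add: cdf_eq)
qed

lemma DERIV_cdf: "1 + g * y \<noteq> 0 \<Longrightarrow> (gev_cdf g has_real_derivative dens g y) (at y)"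
proof -
  assume "1 + g * y \<noteq> 0"
  then consider "1 + g * y > 0" | "1 + g * y < 0" by linarith
  then show ?thesis
  proof cases
    case 1
    have "((\<lambda>y. exp (- TT g y)) has_real_derivative exp (- TT g y) * (- (- TT g y / (1 + g * y)))) (at y)"
      by (rule DERIV_chain2[OF DERIV_exp DERIV_minus[OF DERIV_TT[OF 1]]])
    also have "exp (- TT g y) * (- (- TT g y / (1 + g * y))) = dens g y"
      using 1 by (simp add: TT_pow dens_def exp_add[symmetric] algebra_simps)
    finally have d: "((\<lambda>y. exp (- TT g y)) has_real_derivative dens g y) (at y)" .
    have "open {y::real. 0 < 1 + g * y}" by (intro open_Collect_less continuous_intros)
    from has_field_derivative_transform_within_open[OF d this] 1 cdf_in show ?thesis by auto
  next
    case 2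
    have d: "((\<lambda>y. if g > 0 then 0 else 1) has_real_derivative dens g y) (at y)"
      using 2 by (simp add: dens_def)
    have "open {y::real. 1 + g * y < 0}" by (intro open_Collect_less continuous_intros)
    from has_field_derivative_transform_within_open[OF d this] 2 cdf_out show ?thesis by auto
  qed
qed


lemma dens_nonneg: "dens g y \<ge> 0" by (simp add: dens_def)

lemma dens_meas[measurable]: "dens g \<in> borel_measurable borel"
  unfolding dens_def[abs_def] TT_def HH_def by measurable

definition Fth :: "real \<Rightarrow> real \<Rightarrow> real \<Rightarrow> real \<Rightarrow> real" where
  "Fth g m s x = gev_cdf g ((x - m) / s)"
definition dth :: "real \<Rightarrow> real \<Rightarrow> real \<Rightarrow> real \<Rightarrow> real" where
  "dth g m s x = dens g ((x - m) / s) / s"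

lemma dth_nonneg: "s > 0 \<Longrightarrow> dth g m s x \<ge> 0" by (simp add: dth_def dens_nonneg)

lemma dth_meas[measurable]: "dth g m s \<in> borel_measurable borel"
  unfolding dth_def[abs_def] by measurable

lemma FTC_th:
  assumes s: "s > 0" and ab: "a \<le> b"
  shows "(dth g m s has_integral (Fth g m s b - Fth g m s a)) {a..b}"
proof (rule fundamental_theorem_of_calculus_interior_strong[where S="{x. 1 + g * ((x - m) / s) = 0}"])
  show "finite {x. 1 + g * ((x - m) / s) = 0}"
  proof (rule finite_subset)
    show "{x. 1 + g * ((x - m) / s) = 0} \<subseteq> {m - s / g}" using s by (cases "g = 0") (auto simp: field_simps)
  qed simp
  show "a \<le> b" by fact
  show "continuous_on {a..b} (Fth g m s)"
    unfolding Fth_def[abs_def]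
  proof (intro continuous_at_imp_continuous_on ballI)
    fix x show "isCont (\<lambda>x. gev_cdf g ((x-m)/s)) x"
      by (rule isCont_o2[OF _ isCont_cdf]) (use s in \<open>auto intro!: continuous_intros\<close>)
  qed
  fix x assume "x \<in> {a<..<b} - {x. 1 + g * ((x - m) / s) = 0}"
  then have "1 + g * ((x - m) / s) \<noteq> 0" by auto
  note d1 = DERIV_cdf[OF this]
  have d2: "((\<lambda>x. (x-m)/s) has_real_derivative 1/s) (at x)" using s by (auto intro!: derivative_eq_intros)
  from DERIV_chain2[OF d1 d2]
  have "((\<lambda>x. gev_cdf g ((x - m) / s)) has_real_derivative dens g ((x - m) / s) * (1 / s)) (at x)" .
  then show "(Fth g m s has_vector_derivative dth g m s x) (at x)"
    by (simp add: Fth_def[abs_def] dth_def has_real_derivative_iff_has_vector_derivative[symmetric])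
qed

lemma Fth_mono: "s > 0 \<Longrightarrow> a \<le> b \<Longrightarrow> Fth g m s a \<le> Fth g m s b"
  using has_integral_nonneg[OF FTC_th, of s a b g m] dth_nonneg by auto

lemma nn_Ioc_th:
  assumes s: "s > 0" and ab: "a \<le> b"
  shows "(\<integral>\<^sup>+ x. ennreal (dth g m s x) * indicator {a<..b} x \<partial>lborel) = ennreal (Fth g m s b - Fth g m s a)"
proof -
  have "(\<integral>\<^sup>+ x. ennreal (dth g m s x) * indicator {a<..b} x \<partial>lborel)
      = (\<integral>\<^sup>+ x. ennreal (indicator {a..b} x * dth g m s x) \<partial>lborel)"
    by (rule nn_integral_cong_AE, use AE_lborel_singleton[of a] in eventually_elim)
       (auto simp: indicator_def)
  also have "\<dots> = ennreal (Fth g m s b - Fth g m s a)"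
    by (rule nn_integral_has_integral_lebesgue[OF _ FTC_th[OF s ab]]) (use s dth_nonneg in auto)
  finally show ?thesis .
qed


lemma cdf_bot: "(gev_cdf g \<longlongrightarrow> 0) at_bot"
proof -
  consider "g > 0" | "g = 0" | "g < 0" by linarith
  then show ?thesis
  proof cases
    case 1
    have "eventually (\<lambda>y. 0 = gev_cdf g y) at_bot"
      unfolding eventually_at_bot_linorder
    proof (intro exI allI impI)
      fix y assume "y \<le> -1/g - 1"
      then have "g * y \<le> g * (-1/g - 1)" using 1 by (simp add: mult_left_mono)
      also have "\<dots> = -1 - g" using 1 by (simp add: field_simps)
      finally show "0 = gev_cdf g y" using 1 by (simp add: cdf_out)
    qed
    from Lim_transform_eventually[OF tendsto_const this] show ?thesis .
  next
    case 2
    have "((\<lambda>y. exp (- exp (- y))) \<longlongrightarrow> (0::real)) at_bot" by real_asymp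
    then show ?thesis using 2 by (simp add: gev_cdf_def[abs_def])
  next
    case 3
    have "((\<lambda>y. exp (- exp (- (ln (1 + g * y) / g)))) \<longlongrightarrow> (0::real)) at_bot" using 3 by real_asymp
    moreover have "eventually (\<lambda>y. exp (- exp (- (ln (1 + g * y) / g))) = gev_cdf g y) at_bot"
      unfolding eventually_at_bot_linorder
    proof (intro exI allI impI)
      fix y :: real assume "y \<le> 0"
      then have "g * y \<ge> 0" using 3 by (simp add: mult_nonpos_nonpos)
      then show "exp (- exp (- (ln (1 + g * y) / g))) = gev_cdf g y"
        using 3 by (simp add: cdf_in TT_def HH_def)
    qed
    ultimately show ?thesis by (rule Lim_transform_eventually)
  qed
qed

lemma cdf_top: "(gev_cdf g \<longlongrightarrow> 1) at_top"
proof -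
  consider "g < 0" | "g = 0" | "g > 0" by linarith
  then show ?thesis
  proof cases
    case 1
    have "eventually (\<lambda>y. 1 = gev_cdf g y) at_top"
      unfolding eventually_at_top_linorder
    proof (intro exI allI impI)
      fix y assume "y \<ge> -1/g + 1"
      then have "g * y \<le> g * (-1/g + 1)" using 1 by (simp add: mult_left_mono_neg)
      also have "\<dots> = -1 + g" using 1 by (simp add: field_simps)
      finally show "1 = gev_cdf g y" using 1 by (simp add: cdf_out)
    qed
    from Lim_transform_eventually[OF tendsto_const this] show ?thesis .
  next
    case 2
    have "((\<lambda>y. exp (- exp (- y))) \<longlongrightarrow> (1::real)) at_top" by real_asymp
    then show ?thesis using 2 by (simp add: gev_cdf_def[abs_def])
  next
    case 3
    have "((\<lambda>y. exp (- exp (- (ln (1 + g * y) / g)))) \<longlongrightarrow> (1::real)) at_top" using 3 by real_asymp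
    moreover have "eventually (\<lambda>y. exp (- exp (- (ln (1 + g * y) / g))) = gev_cdf g y) at_top"
      unfolding eventually_at_top_linorder
    proof (intro exI allI impI)
      fix y :: real assume "y \<ge> 0"
      then have "g * y \<ge> 0" using 3 by simp
      then show "exp (- exp (- (ln (1 + g * y) / g))) = gev_cdf g y"
        using 3 by (simp add: cdf_in TT_def HH_def)
    qed
    ultimately show ?thesis by (rule Lim_transform_eventually)
  qed
qed

lemma Fth_bot: "s > 0 \<Longrightarrow> (Fth g m s \<longlongrightarrow> 0) at_bot"
proof -
  assume s: "s > 0"
  have "filterlim (\<lambda>x. (x - m) / s) at_bot at_bot" using s by real_asymp
  from filterlim_compose[OF cdf_bot this] show ?thesis by (simp add: Fth_def[abs_def])
qed

lemma Fth_top: "s > 0 \<Longrightarrow> (Fth g m s \<longlongrightarrow> 1) at_top"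
proof -
  assume s: "s > 0"
  have "filterlim (\<lambda>x. (x - m) / s) at_top at_top" using s by real_asymp
  from filterlim_compose[OF cdf_top this] show ?thesis by (simp add: Fth_def[abs_def])
qed

lemma isCont_Fth: "s > 0 \<Longrightarrow> isCont (Fth g m s) x"
  unfolding Fth_def[abs_def] by (rule isCont_o2[OF _ isCont_cdf]) (auto intro!: continuous_intros)

lemma interval_density:
  assumes s: "s > 0"
  shows "interval_measure (Fth g m s) = density lborel (\<lambda>x. ennreal (dth g m s x))"
proof (rule measure_eqI_generator_eq[where \<Omega>=UNIV and E="range (\<lambda>(a, b). {a<..b::real})"
      and A="\<lambda>i. {- real (i::nat)<..real i}"])
  have mono: "\<And>x y. x \<le> y \<Longrightarrow> Fth g m s x \<le> Fth g m s y" using Fth_mono[OF s] by blast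
  have rc: "\<And>a. continuous (at_right a) (Fth g m s)"
    using isCont_Fth[OF s] by (simp add: continuous_at_imp_continuous_at_within)
  fix X assume "X \<in> range (\<lambda>(a, b). {a<..b::real})"
  then obtain a b where Xeq: "X = {a<..b}" by auto
  show "emeasure (interval_measure (Fth g m s)) X = emeasure (density lborel (\<lambda>x. ennreal (dth g m s x))) X"
  proof (cases "a \<le> b")
    case True
    then show ?thesis unfolding Xeq
      by (simp add: emeasure_interval_measure_Ioc[OF True mono rc] emeasure_density nn_Ioc_th[OF s True])
  next
    case False
    then show ?thesis unfolding Xeq by simp
  qed
next
  have mono: "\<And>x y. x \<le> y \<Longrightarrow> Fth g m s x \<le> Fth g m s y" using Fth_mono[OF s] by blast
  have rc: "\<And>a. continuous (at_right a) (Fth g m s)"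
    using isCont_Fth[OF s] by (simp add: continuous_at_imp_continuous_at_within)
  fix i :: nat
  show "emeasure (interval_measure (Fth g m s)) {- real i<..real i} \<noteq> \<infinity>"
    by (subst emeasure_interval_measure_Ioc[OF _ mono rc]) auto
next
  show "(\<Union>i. {- real (i::nat)<..real i}) = UNIV"
    by (rule UN_Ioc_eq_UNIV)
qed (auto simp: borel_sigma_sets_Ioc Int_stable_def)

lemma interval_UNIV: "s > 0 \<Longrightarrow> emeasure (interval_measure (Fth g m s)) UNIV = 1"
proof -
  assume s: "s > 0"
  have mono: "\<And>x y. x \<le> y \<Longrightarrow> Fth g m s x \<le> Fth g m s y" using Fth_mono[OF s] by blast
  have rc: "\<And>a. continuous (at_right a) (Fth g m s)"
      using isCont_Fth[OF s] by (simp add: continuous_at_imp_continuous_at_within)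
  show ?thesis using interval_measure_UNIV[of "Fth g m s" 1, OF mono rc Fth_bot[OF s] Fth_top[OF s]] by simp
qed

lemma dth_int1: "s > 0 \<Longrightarrow> (\<integral>\<^sup>+ x. ennreal (dth g m s x) \<partial>lborel) = 1"
  using interval_UNIV[of s g m] interval_density[of s g m]
  by (simp add: emeasure_density)

lemma Fth01: "Fth g 0 1 = gev_cdf g" by (simp add: fun_eq_iff Fth_def)
lemma dth01: "dth g 0 1 = dens g" by (simp add: fun_eq_iff dth_def)

lemma GEV_eq: "GEV g = density lborel (\<lambda>x. ennreal (dens g x))"
  using interval_density[of 1 g 0] by (simp add: GEV_def Fth01 dth01)

lemma GEV_UNIV: "emeasure (GEV g) UNIV = 1"
  using interval_UNIV[of 1 g 0] by (simp add: GEV_def Fth01)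


definition psi :: "real \<Rightarrow> real" where "psi t = (6 + 4 * t - 4 * sqrt t) * exp (- t)"
definition dpsi :: "real \<Rightarrow> real" where "dpsi t = (2 / sqrt t + 4 * t + 2 - 4 * sqrt t) * exp (- t)"

lemma DERIV_psi: "t > 0 \<Longrightarrow> (psi has_real_derivative - dpsi t) (at t)"
  unfolding psi_def[abs_def] dpsi_def
  by (auto intro!: derivative_eq_intros simp: field_simps real_sqrt_mult[symmetric])

lemma sqrt_am: "t \<ge> 0 \<Longrightarrow> 2 * sqrt t \<le> t + 1"
proof -
  assume t: "t \<ge> 0"
  have "0 \<le> (sqrt t - 1)^2" by simp
  also have "\<dots> = t - 2 * sqrt t + 1" using real_sqrt_pow2[OF t] by (simp add: power2_diff)
  finally show ?thesis by simp
qed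

lemma abs_ln_bd: "t > 0 \<Longrightarrow> \<bar>ln t\<bar> \<le> t + 2 / sqrt t"
proof (cases "t \<ge> 1")
  case True
  assume t: "t > 0"
  have "ln t \<le> t - 1" using ln_le_minus_one t by blast
  moreover have "ln t \<ge> 0" using True by simp
  moreover have "2 / sqrt t \<ge> 0" using t by simp
  ultimately show ?thesis by linarith
next
  case False
  assume t: "t > 0"
  have st: "sqrt t > 0" using t by simp
  have "ln (1 / sqrt t) \<le> 1 / sqrt t - 1" using ln_le_minus_one st by simp
  moreover have "ln (1 / sqrt t) = - ln t / 2" using t by (simp add: ln_div ln_sqrt)
  ultimately have "- ln t \<le> 2 / sqrt t - 2" by simp
  moreover have "ln t \<le> 0" using False t by simp
  ultimately show ?thesis using t by simp
qed

lemma dpsi_bd: "t > 0 \<Longrightarrow> (\<bar>ln t\<bar> + t) * exp (- t) \<le> dpsi t"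
proof -
  assume t: "t > 0"
  have "\<bar>ln t\<bar> + t \<le> 2 / sqrt t + 4 * t + 2 - 4 * sqrt t"
    using abs_ln_bd[OF t] sqrt_am[OF less_imp_le[OF t]] t by linarith
  then show ?thesis unfolding dpsi_def by (simp add: mult_right_mono)
qed

lemma dpsi_nonneg: "t > 0 \<Longrightarrow> dpsi t \<ge> 0"
  using dpsi_bd[of t] by (smt (verit) abs_ge_zero exp_gt_zero mult_nonneg_nonneg)

lemma psi_bds: "t > 0 \<Longrightarrow> 0 \<le> psi t \<and> psi t \<le> 10"
proof -
  assume t: "t > 0"
  have a: "0 \<le> 6 + 4 * t - 4 * sqrt t" using sqrt_am[OF less_imp_le[OF t]] t by linarith
  have b: "6 + 4 * t - 4 * sqrt t \<le> 6 + 4 * t" using t by simp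
  have e1: "exp (- t) \<le> 1" using t by simp
  have e2: "t * exp (- t) \<le> 1"
  proof -
    have "t \<le> exp t" using exp_ge_add_one_self[of t] by linarith
    then show ?thesis by (simp add: exp_minus field_simps)
  qed
  have "psi t \<le> (6 + 4 * t) * exp (- t)" unfolding psi_def using b by (simp add: mult_right_mono)
  also have "\<dots> = 6 * exp (- t) + 4 * (t * exp (- t))" by (simp add: algebra_simps)
  also have "\<dots> \<le> 10" using e1 e2 by linarith
  finally show ?thesis using a by (simp add: psi_def)
qed

definition Psi :: "real \<Rightarrow> real \<Rightarrow> real" where
  "Psi g x = (if 1 + g * x > 0 then psi (TT g x) else if g > 0 then 0 else 6)"

definition mfun :: "real \<Rightarrow> real \<Rightarrow> real" where
  "mfun g x = (if 1 + g * x > 0 then dpsi (TT g x) * exp (- (1 + g) * HH g x) else 0)"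

lemma mfun_nonneg: "mfun g x \<ge> 0"
  unfolding mfun_def using dpsi_nonneg[OF TT_pos] by simp

lemma mfun_meas[measurable]: "mfun g \<in> borel_measurable borel"
  unfolding mfun_def[abs_def] dpsi_def TT_def HH_def by measurable

lemma Psi_bds: "0 \<le> Psi g x \<and> Psi g x \<le> 10"
  unfolding Psi_def using psi_bds[OF TT_pos] by auto

lemma isCont_Psi: "isCont (Psi g) x"
  unfolding Psi_def[abs_def]
  by (rule cont_comp) (unfold psi_def, intro continuous_intros, real_asymp, real_asymp)

lemma DERIV_Psi: "1 + g * y \<noteq> 0 \<Longrightarrow> (Psi g has_real_derivative mfun g y) (at y)"
proof -
  assume "1 + g * y \<noteq> 0"
  then consider "1 + g * y > 0" | "1 + g * y < 0" by linarith
  then show ?thesis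
  proof cases
    case 1
    have "((\<lambda>y. psi (TT g y)) has_real_derivative (- dpsi (TT g y)) * (- TT g y / (1 + g * y))) (at y)"
      by (rule DERIV_chain2[OF DERIV_psi[OF TT_pos] DERIV_TT[OF 1]])
    also have "(- dpsi (TT g y)) * (- TT g y / (1 + g * y)) = mfun g y"
      using 1 by (simp add: TT_pow mfun_def)
    finally have d: "((\<lambda>y. psi (TT g y)) has_real_derivative mfun g y) (at y)" .
    have "open {y::real. 0 < 1 + g * y}" by (intro open_Collect_less continuous_intros)
    from has_field_derivative_transform_within_open[OF d this] 1 show ?thesis by (auto simp: Psi_def)
  next
    case 2
    have d: "((\<lambda>y. if g > 0 then 0 else 6) has_real_derivative mfun g y) (at y)"
      using 2 by (simp add: mfun_def)
    have "open {y::real. 1 + g * y < 0}" by (intro open_Collect_less continuous_intros)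
    from has_field_derivative_transform_within_open[OF d this] 2 show ?thesis by (auto simp: Psi_def)
  qed
qed

lemma FTC_Psi:
  assumes ab: "a \<le> b"
  shows "(mfun g has_integral (Psi g b - Psi g a)) {a..b}"
proof (rule fundamental_theorem_of_calculus_interior_strong[where S="{x. 1 + g * x = 0}"])
  show "finite {x. 1 + g * x = 0}"
  proof (rule finite_subset)
    show "{x. 1 + g * x = 0} \<subseteq> {- 1 / g}" by (cases "g = 0") (auto simp: field_simps)
  qed simp
  show "a \<le> b" by fact
  show "continuous_on {a..b} (Psi g)"
    by (intro continuous_at_imp_continuous_on ballI isCont_Psi)
  fix x assume "x \<in> {a<..<b} - {x. 1 + g * x = 0}"
  then have "1 + g * x \<noteq> 0" by auto
  from DERIV_Psi[OF this] show "(Psi g has_vector_derivative mfun g x) (at x)"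
    by (simp add: has_real_derivative_iff_has_vector_derivative[symmetric])
qed

lemma nn_Ioc_m:
  assumes ab: "a \<le> b"
  shows "(\<integral>\<^sup>+ x. ennreal (mfun g x) * indicator {a<..b} x \<partial>lborel) \<le> 10"
proof -
  have "(\<integral>\<^sup>+ x. ennreal (mfun g x) * indicator {a<..b} x \<partial>lborel)
      = (\<integral>\<^sup>+ x. ennreal (indicator {a..b} x * mfun g x) \<partial>lborel)"
    by (rule nn_integral_cong_AE, use AE_lborel_singleton[of a] in eventually_elim)
       (auto simp: indicator_def)
  also have "\<dots> = ennreal (Psi g b - Psi g a)"
    by (rule nn_integral_has_integral_lebesgue[OF _ FTC_Psi[OF ab]]) (use mfun_nonneg in auto)
  also have "\<dots> \<le> 10"
  proof -
    have "Psi g b - Psi g a \<le> 10" using Psi_bds[of g a] Psi_bds[of g b] by linarith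
    from ennreal_leI[OF this] show ?thesis by simp
  qed
  finally show ?thesis .
qed

lemma nn_m: "(\<integral>\<^sup>+ x. ennreal (mfun g x) \<partial>lborel) \<le> 10"
proof -
  let ?D = "density lborel (\<lambda>x. ennreal (mfun g x))"
  have "(\<integral>\<^sup>+ x. ennreal (mfun g x) \<partial>lborel) = emeasure ?D UNIV"
    by (simp add: emeasure_density)
  also have "\<dots> = emeasure ?D (\<Union>i::nat. {- real i<..real i})" by (simp add: UN_Ioc_eq_UNIV)
  also have "\<dots> = (SUP i. emeasure ?D {- real i<..real i})"
    by (rule SUP_emeasure_incseq[symmetric]) (auto simp: incseq_def)
  also have "\<dots> \<le> 10"
  proof (rule SUP_least)
    fix i :: nat show "emeasure ?D {- real i<..real i} \<le> 10"
      using nn_Ioc_m[of "- real i" "real i" g] by (simp add: emeasure_density)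
  qed
  finally show ?thesis .
qed


definition Lth :: "real \<Rightarrow> real \<Rightarrow> real \<Rightarrow> real \<Rightarrow> real" where
  "Lth g m s x = - (1 + g) * HH g ((x - m) / s) - TT g ((x - m) / s) - ln s"

lemma lp_in: "1 + g * ((x - m) / s) > 0 \<Longrightarrow> gev_loglik_param (g, m, s) x = ereal (Lth g m s x)"
  by (simp add: gev_loglik_param_def loglik_in Lth_def)

lemma lp_out: "\<not> 1 + g * ((x - m) / s) > 0 \<Longrightarrow> gev_loglik_param (g, m, s) x = - \<infinity>"
  by (simp add: gev_loglik_param_def loglik_out)

lemma dth_in: "s > 0 \<Longrightarrow> 1 + g * ((x - m) / s) > 0 \<Longrightarrow> dth g m s x = exp (Lth g m s x)"
  by (simp add: dth_def dens_def Lth_def exp_diff)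

lemma dth_out: "\<not> 1 + g * ((x - m) / s) > 0 \<Longrightarrow> dth g m s x = 0"
  by (simp add: dth_def dens_def)

lemma lp_meas[measurable]: "gev_loglik_param (g, m, s) \<in> borel_measurable borel"
  unfolding gev_loglik_param_def[abs_def] gev_loglik_def by measurable

lemma Lth_ub:
  assumes g: "g > -1" and s: "s > 0"
  shows "Lth g m s x \<le> (1 + g) * ln (1 + g) - (1 + g) - ln s"
proof -
  define c where "c = 1 + g"
  define u where "u = - HH g ((x - m) / s)"
  have c: "c > 0" using g by (simp add: c_def)
  have "exp u = c * exp (u - ln c)" using c by (simp add: exp_diff)
  also have "\<dots> \<ge> c * (1 + (u - ln c))" using c exp_ge_add_one_self[of "u - ln c"] by (intro mult_left_mono) auto
  finally have "c * u - exp u \<le> c * ln c - c" by (simp add: algebra_simps)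
  then show ?thesis unfolding Lth_def TT_def c_def[symmetric] by (simp add: u_def)
qed

lemma exp_strict: "t \<noteq> 0 \<Longrightarrow> 1 + t < exp (t::real)"
proof (cases "1 + t / 2 \<ge> 0")
  case True
  assume t: "t \<noteq> 0"
  have "(1 + t/2)^2 \<le> exp (t/2) ^ 2" using True exp_ge_add_one_self[of "t/2"] by (intro power_mono) auto
  also have "\<dots> = exp t" by (simp add: exp_double[symmetric] power2_eq_square exp_add[symmetric])
  finally have "1 + t + t^2/4 \<le> exp t" by (simp add: power2_eq_square field_simps)
  moreover have "t^2 > 0" using t by simp
  ultimately show ?thesis by linarith
next
  case False
  then have "1 + t < 0" by linarith
  then show ?thesis using exp_gt_zero[of t] by linarith
qed

lemma HH_zero: "1 + g * y > 0 \<Longrightarrow> HH g y = 0 \<Longrightarrow> y = 0"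
  by (cases "g = 0") (auto simp: HH_def)

lemma cdf_in_01: "1 + g * y > 0 \<Longrightarrow> 0 < gev_cdf g y \<and> gev_cdf g y < 1"
  using TT_pos[of g y] by (simp add: cdf_in)

lemma ident:
  assumes s: "s > 0" and eq: "\<And>x. gev_cdf g ((x - m) / s) = gev_cdf g0 x"
  shows "g = g0 \<and> m = 0 \<and> s = 1"
proof -
  define d where "d = 1 / (1 + \<bar>g0\<bar>)"
  have d: "d > 0" by (simp add: d_def add_pos_nonneg)
  have J: "1 + g0 * x > 0" if "\<bar>x\<bar> < d" for x
  proof -
    have "\<bar>g0 * x\<bar> \<le> \<bar>g0\<bar> * d" using that by (simp add: abs_mult mult_left_mono)
    also have "\<dots> < 1" by (simp add: d_def field_simps)
    finally show ?thesis by linarith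
  qed
  have S: "1 + g * ((x - m) / s) > 0 \<and> HH g ((x - m) / s) = HH g0 x" if x: "\<bar>x\<bar> < d" for x
  proof -
    have j: "1 + g0 * x > 0" using J[OF x] .
    have c: "0 < gev_cdf g ((x - m) / s) \<and> gev_cdf g ((x - m) / s) < 1" using eq cdf_in_01[OF j] by simp
    have p: "1 + g * ((x - m) / s) > 0"
    proof (rule ccontr)
      assume "\<not> 1 + g * ((x - m) / s) > 0"
      then show False using c by (simp add: cdf_out split: if_splits)
    qed
    have "exp (- TT g ((x - m) / s)) = exp (- TT g0 x)" using eq[of x] cdf_in[OF p] cdf_in[OF j] by simp
    then have "TT g ((x - m) / s) = TT g0 x" by simp
    then have "HH g ((x - m) / s) = HH g0 x" by (simp add: TT_def)
    with p show ?thesis by simp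
  qed
  have D: "s * (1 + g * ((x - m) / s)) = 1 + g0 * x" if x: "\<bar>x\<bar> < d" for x
  proof -
    have p: "1 + g * ((x - m) / s) > 0" using S[OF x] by simp
    have d2: "((\<lambda>x. (x-m)/s) has_real_derivative 1/s) (at x)" using s by (auto intro!: derivative_eq_intros)
    from DERIV_chain2[OF DERIV_HH[OF p] d2]
    have h1: "((\<lambda>x. HH g ((x - m) / s)) has_real_derivative 1 / (1 + g * ((x - m) / s)) * (1 / s)) (at x)" .
    have "open {x::real. \<bar>x\<bar> < d}" by (intro open_Collect_less continuous_intros)
    from has_field_derivative_transform_within_open[OF h1 this] x S
    have h2: "(HH g0 has_real_derivative 1 / (1 + g * ((x - m) / s)) * (1 / s)) (at x)" by auto
    from DERIV_unique[OF h2 DERIV_HH[OF J[OF x]]]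
    have "1 / (1 + g * ((x - m) / s)) * (1 / s) = 1 / (1 + g0 * x)" .
    then show ?thesis using p s J[OF x] by (simp add: field_simps)
  qed
  have "HH g ((0 - m) / s) = HH g0 0" using S[of 0] d by simp
  then have "HH g ((0 - m) / s) = 0" by (simp add: HH_def)
  from HH_zero[OF _ this] S[of 0] d have "(0 - m) / s = 0" by simp
  then have m: "m = 0" using s by simp
  have "s = 1" using D[of 0] d m by simp
  moreover have "s * (1 + g * ((d/2 - m) / s)) = 1 + g0 * (d/2)" using D[of "d/2"] d by simp
  ultimately have "g * (d/2) = g0 * (d/2)" using m by (simp add: field_simps)
  then have "g = g0" using d by simp
  with m \<open>s = 1\<close> show ?thesis by simp
qed


lemma e2_pos: "e2ennreal (max 0 (ereal a)) = ennreal (max 0 a)"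
  by (cases "a \<ge> 0") (auto simp: max_def e2ennreal_neg)

lemma e2_neg: "e2ennreal (max 0 (- ereal a)) = ennreal (max 0 (- a))"
  using e2_pos[of "-a"] by simp

lemma lp_meas'[measurable]: "(\<lambda>x. e2ennreal (max 0 (gev_loglik_param (g, m, s) x))) \<in> borel_measurable borel"
  by measurable

lemma lp_meas''[measurable]: "(\<lambda>x. e2ennreal (max 0 (- gev_loglik_param (g, m, s) x))) \<in> borel_measurable borel"
  by measurable

lemma space_GEV[simp]: "space (GEV g) = UNIV" by (simp add: GEV_def)
lemma sets_GEV[simp, measurable_cong]: "sets (GEV g) = sets borel" by (simp add: GEV_def)

lemma P_fin:
  assumes g: "g > -1" and s: "s > 0"
  shows "(\<integral>\<^sup>+ x. e2ennreal (max 0 (gev_loglik_param (g, m, s) x)) \<partial>GEV g0) \<noteq> top"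
proof -
  define C where "C = (1 + g) * ln (1 + g) - (1 + g) - ln s"
  have pw: "e2ennreal (max 0 (gev_loglik_param (g, m, s) x)) \<le> ennreal (max 0 C)" for x
  proof (cases "1 + g * ((x - m) / s) > 0")
    case True
    have "Lth g m s x \<le> C" using Lth_ub[OF g s] by (simp add: C_def)
    then show ?thesis using True by (simp add: lp_in e2_pos ennreal_leI)
  next
    case False
    then show ?thesis by (simp add: lp_out e2ennreal_neg)
  qed
  have "(\<integral>\<^sup>+ x. e2ennreal (max 0 (gev_loglik_param (g, m, s) x)) \<partial>GEV g0) \<le> (\<integral>\<^sup>+ x. ennreal (max 0 C) \<partial>GEV g0)"
    by (rule nn_integral_mono) (rule pw)
  also have "\<dots> = ennreal (max 0 C)" using GEV_UNIV[of g0] by simp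
  finally have "(\<integral>\<^sup>+ x. e2ennreal (max 0 (gev_loglik_param (g, m, s) x)) \<partial>GEV g0) \<le> ennreal (max 0 C)" .
  then show ?thesis using neq_top_trans[OF ennreal_neq_top] by blast
qed

lemma N0_pw:
  assumes g0: "g0 > -1"
  shows "ennreal (dens g0 x) * e2ennreal (max 0 (- gev_loglik_param (g0, 0, 1) x)) \<le> ennreal ((2 + g0) * mfun g0 x)"
proof (cases "1 + g0 * x > 0")
  case True
  define T where "T = TT g0 x"
  define H where "H = HH g0 x"
  define E where "E = exp (- (1 + g0) * H)"
  have T: "T > 0" by (simp add: T_def TT_pos)
  have HT: "H = - ln T" by (simp add: T_def H_def TT_def)
  have E: "E > 0" by (simp add: E_def)
  have L: "Lth g0 0 1 x = - (1 + g0) * H - T" by (simp add: Lth_def H_def T_def)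
  have dens: "dens g0 x = E * exp (- T)" using True by (simp add: dens_def E_def H_def T_def mult_exp_exp)
  have m: "mfun g0 x = dpsi T * E" using True by (simp add: mfun_def E_def H_def T_def)
  have "max 0 ((1 + g0) * H + T) \<le> (1 + g0) * \<bar>H\<bar> + T"
    using g0 T by (auto intro!: mult_left_mono simp: max_def)
  also have "\<dots> \<le> (2 + g0) * (\<bar>ln T\<bar> + T)"
  proof -
    have h1: "0 < T * (1 + g0)" using g0 T by simp
    have h: "0 \<le> T + (\<bar>ln T\<bar> + T * g0)" using h1 abs_ge_zero[of "ln T"] by (simp add: algebra_simps)
    show ?thesis using h HT by (simp add: algebra_simps)
  qed
  finally have a: "max 0 ((1 + g0) * H + T) \<le> (2 + g0) * (\<bar>ln T\<bar> + T)" .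
  have "exp (- T) * max 0 ((1 + g0) * H + T) \<le> exp (- T) * ((2 + g0) * (\<bar>ln T\<bar> + T))"
    by (rule mult_left_mono[OF a]) simp
  also have "\<dots> = (2 + g0) * ((\<bar>ln T\<bar> + T) * exp (- T))" by simp
  also have "\<dots> \<le> (2 + g0) * dpsi T" using dpsi_bd[OF T] g0 by (intro mult_left_mono) auto
  finally have b: "exp (- T) * max 0 ((1 + g0) * H + T) \<le> (2 + g0) * dpsi T" .
  have "dens g0 x * max 0 ((1 + g0) * H + T) = E * (exp (- T) * max 0 ((1 + g0) * H + T))"
    by (simp add: dens)
  also have "\<dots> \<le> E * ((2 + g0) * dpsi T)" using b E by (intro mult_left_mono) auto
  also have "\<dots> = (2 + g0) * mfun g0 x" by (simp add: m)
  finally have c: "dens g0 x * max 0 ((1 + g0) * H + T) \<le> (2 + g0) * mfun g0 x" .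
  have ng: "- gev_loglik_param (g0, 0, 1) x = ereal ((1 + g0) * H + T)"
    using True lp_in[of g0 x 0 1] L by (simp add: algebra_simps)
  have "ennreal (dens g0 x) * e2ennreal (max 0 (- gev_loglik_param (g0, 0, 1) x))
      = ennreal (dens g0 x * max 0 ((1 + g0) * H + T))"
    unfolding ng e2_pos by (rule ennreal_mult[symmetric]) (auto simp: dens_nonneg)
  also have "\<dots> \<le> ennreal ((2 + g0) * mfun g0 x)" using c by (rule ennreal_leI)
  finally show ?thesis .
next
  case False
  then show ?thesis by (simp add: dens_def)
qed

lemma N0_fin:
  assumes g0: "g0 > -1"
  shows "(\<integral>\<^sup>+ x. e2ennreal (max 0 (- gev_loglik_param (g0, 0, 1) x)) \<partial>GEV g0) \<noteq> top"
proof -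
  have "(\<integral>\<^sup>+ x. e2ennreal (max 0 (- gev_loglik_param (g0, 0, 1) x)) \<partial>GEV g0)
     = (\<integral>\<^sup>+ x. ennreal (dens g0 x) * e2ennreal (max 0 (- gev_loglik_param (g0, 0, 1) x)) \<partial>lborel)"
    unfolding GEV_eq by (rule nn_integral_density) auto
  also have "\<dots> \<le> (\<integral>\<^sup>+ x. ennreal (2 + g0) * ennreal (mfun g0 x) \<partial>lborel)"
  proof (intro nn_integral_mono)
    fix x
    have "ennreal ((2+g0) * mfun g0 x) = ennreal (2+g0) * ennreal (mfun g0 x)"
      by (rule ennreal_mult) (use g0 mfun_nonneg in auto)
    then show "ennreal (dens g0 x) * e2ennreal (max 0 (- gev_loglik_param (g0, 0, 1) x)) \<le> ennreal (2 + g0) * ennreal (mfun g0 x)"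
      using N0_pw[OF g0, of x] by simp
  qed
  also have "\<dots> = ennreal (2 + g0) * (\<integral>\<^sup>+ x. ennreal (mfun g0 x) \<partial>lborel)"
    by (rule nn_integral_cmult) auto
  also have "\<dots> \<le> ennreal (2 + g0) * 10" by (intro mult_left_mono nn_m) auto
  also have "\<dots> = ennreal ((2 + g0) * 10)" using g0 by (subst ennreal_mult) auto
  finally show ?thesis using neq_top_trans[OF ennreal_neq_top] by blast
qed

lemma key:
  fixes g m :: real
  assumes s: "s > 0" and x: "1 + g0 * x > 0"
  defines "g1 \<equiv> e2ennreal (max 0 (gev_loglik_param (g, m, s) x)) + e2ennreal (max 0 (- gev_loglik_param (g0, 0, 1) x)) + 1"
    and "g2 \<equiv> e2ennreal (max 0 (gev_loglik_param (g0, 0, 1) x)) + e2ennreal (max 0 (- gev_loglik_param (g, m, s) x))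
               + ennreal (dth g m s x / dens g0 x)"
  shows "g1 \<le> g2" and "g2 \<le> g1 \<Longrightarrow> dth g m s x = dens g0 x"
proof -
  define b where "b = Lth g0 0 1 x"
  have f0: "gev_loglik_param (g0, 0, 1) x = ereal b" using lp_in[of g0 x 0 1] x by (simp add: b_def)
  have d0: "dens g0 x = exp b" using dth_in[of 1 g0 x 0] x by (simp add: b_def dth01)
  have "g1 \<le> g2 \<and> (g2 \<le> g1 \<longrightarrow> dth g m s x = dens g0 x)"
  proof (cases "1 + g * ((x - m) / s) > 0")
    case False
    have "g2 = top" using False by (simp add: g2_def lp_out)
    moreover have "g1 \<noteq> top" using False by (simp add: g1_def lp_out f0 e2_neg e2_pos e2ennreal_neg)
    ultimately show ?thesis by (simp add: top_unique)
  next
    case True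
    define a where "a = Lth g m s x"
    have f: "gev_loglik_param (g, m, s) x = ereal a" using lp_in True by (simp add: a_def)
    have d: "dth g m s x = exp a" using dth_in[OF s True] by (simp add: a_def)
    have G1: "g1 = ennreal (max 0 a + max 0 (- b) + 1)"
    proof -
      have "ennreal (max 0 a + max 0 (- b) + 1) = ennreal (max 0 a) + ennreal (max 0 (- b)) + ennreal 1"
        by (simp add: ennreal_plus)
      then show ?thesis by (simp add: g1_def f f0 e2_pos e2_neg)
    qed
    have G2: "g2 = ennreal (max 0 b + max 0 (- a) + exp (a - b))"
    proof -
      have "ennreal (max 0 b + max 0 (- a) + exp (a - b)) = ennreal (max 0 b) + ennreal (max 0 (- a)) + ennreal (exp (a - b))"
        by (simp add: ennreal_plus)
      then show ?thesis by (simp add: g2_def f f0 e2_pos e2_neg d d0 exp_diff)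
    qed
    have id: "max 0 a + max 0 (- b) + 1 = max 0 b + max 0 (- a) + (a - b + 1)" by (simp add: max_def)
    have r1: "max 0 a + max 0 (- b) + 1 \<le> max 0 b + max 0 (- a) + exp (a - b)"
      using exp_ge_add_one_self[of "a - b"] id by linarith
    have r2: "a = b" if "max 0 b + max 0 (- a) + exp (a - b) \<le> max 0 a + max 0 (- b) + 1"
    proof (rule ccontr)
      assume "a \<noteq> b"
      then have "1 + (a - b) < exp (a - b)" by (intro exp_strict) simp
      then show False using that id by linarith
    qed
    show ?thesis
    proof
      show "g1 \<le> g2" unfolding G1 G2 by (rule ennreal_leI[OF r1])
      show "g2 \<le> g1 \<longrightarrow> dth g m s x = dens g0 x"
      proof
        assume "g2 \<le> g1"
        then have "max 0 b + max 0 (- a) + exp (a - b) \<le> max 0 a + max 0 (- b) + 1"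
          unfolding G1 G2 by (subst (asm) ennreal_le_iff) auto
        then show "dth g m s x = dens g0 x" using r2 d d0 by simp
      qed
    qed
  qed
  then show "g1 \<le> g2" and "g2 \<le> g1 \<Longrightarrow> dth g m s x = dens g0 x" by auto
qed


theorem lemma3p1:
  fixes \<gamma>\<^sub>0 \<gamma> \<mu> \<sigma> :: real
  assumes "\<gamma>\<^sub>0 > -1"
    and "\<gamma> > -1" and "\<sigma> > 0"
  shows "ext_integral (GEV \<gamma>\<^sub>0) (gev_loglik_param (\<gamma>, \<mu>, \<sigma>))
           \<le> ext_integral (GEV \<gamma>\<^sub>0) (gev_loglik_param (\<gamma>\<^sub>0, 0, 1))
         \<and> (ext_integral (GEV \<gamma>\<^sub>0) (gev_loglik_param (\<gamma>, \<mu>, \<sigma>))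
           = ext_integral (GEV \<gamma>\<^sub>0) (gev_loglik_param (\<gamma>\<^sub>0, 0, 1))
         \<longleftrightarrow> (\<gamma>, \<mu>, \<sigma>) = (\<gamma>\<^sub>0, 0, 1))"
proof -
  note g0 = assms(1) and g = assms(2) and s = assms(3)
  define G where "G = GEV \<gamma>\<^sub>0"
  define f where "f = gev_loglik_param (\<gamma>, \<mu>, \<sigma>)"
  define f0 where "f0 = gev_loglik_param (\<gamma>\<^sub>0, 0, 1)"
  define P where "P = (\<integral>\<^sup>+ x. e2ennreal (max 0 (f x)) \<partial>G)"
  define N where "N = (\<integral>\<^sup>+ x. e2ennreal (max 0 (- f x)) \<partial>G)"
  define P0 where "P0 = (\<integral>\<^sup>+ x. e2ennreal (max 0 (f0 x)) \<partial>G)"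
  define N0 where "N0 = (\<integral>\<^sup>+ x. e2ennreal (max 0 (- f0 x)) \<partial>G)"
  define q where "q = (\<lambda>x. ennreal (dth \<gamma> \<mu> \<sigma> x / dens \<gamma>\<^sub>0 x))"
  define Q where "Q = (\<integral>\<^sup>+ x. q x \<partial>G)"
  define A where "A = {x. 0 < dens \<gamma>\<^sub>0 x}"
  have Ameas[measurable]: "A \<in> sets borel" unfolding A_def by measurable
  have [measurable]: "f \<in> borel_measurable borel" "f0 \<in> borel_measurable borel" by (simp_all add: f_def f0_def)
  have [measurable]: "q \<in> borel_measurable borel" unfolding q_def by measurable
  have E: "ext_integral G f = enn2ereal P - enn2ereal N" by (simp add: ext_integral_def P_def N_def)
  have E0: "ext_integral G f0 = enn2ereal P0 - enn2ereal N0" by (simp add: ext_integral_def P0_def N0_def)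
  have Pf: "P \<noteq> top" using P_fin[OF g s] by (simp add: P_def f_def G_def)
  have P0f: "P0 \<noteq> top" using P_fin[where g="\<gamma>\<^sub>0" and s=1 and m=0 and g0="\<gamma>\<^sub>0"] g0 by (simp add: P0_def f0_def G_def)
  have N0f: "N0 \<noteq> top" using N0_fin[OF g0] by (simp add: N0_def f0_def G_def)
  have pw_q: "ennreal (dens \<gamma>\<^sub>0 x) * q x = ennreal (dth \<gamma> \<mu> \<sigma> x) * indicator A x" for x
  proof (cases "0 < dens \<gamma>\<^sub>0 x")
    case True
    have "ennreal (dens \<gamma>\<^sub>0 x) * q x = ennreal (dens \<gamma>\<^sub>0 x * (dth \<gamma> \<mu> \<sigma> x / dens \<gamma>\<^sub>0 x))"
      unfolding q_def using True dth_nonneg[OF s] by (intro ennreal_mult[symmetric]) auto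
    then show ?thesis using True by (simp add: A_def)
  next
    case False
    then have "dens \<gamma>\<^sub>0 x = 0" using dens_nonneg[of \<gamma>\<^sub>0 x] by linarith
    then show ?thesis using False by (simp add: A_def)
  qed
  have Qeq: "Q = (\<integral>\<^sup>+ x. ennreal (dth \<gamma> \<mu> \<sigma> x) * indicator A x \<partial>lborel)"
    unfolding Q_def G_def GEV_eq by (subst nn_integral_density) (auto simp: pw_q)
  have Q1: "Q \<le> 1"
  proof -
    have "Q \<le> (\<integral>\<^sup>+ x. ennreal (dth \<gamma> \<mu> \<sigma> x) \<partial>lborel)"
      unfolding Qeq by (intro nn_integral_mono) (auto split: split_indicator)
    then show ?thesis using dth_int1[OF s] by simp
  qed
  define g1 where "g1 = (\<lambda>x. e2ennreal (max 0 (f x)) + e2ennreal (max 0 (- f0 x)) + 1)"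
  define g2 where "g2 = (\<lambda>x. e2ennreal (max 0 (f0 x)) + e2ennreal (max 0 (- f x)) + q x)"
  have [measurable]: "g1 \<in> borel_measurable borel" "g2 \<in> borel_measurable borel"
    unfolding g1_def g2_def by measurable
  have AEsupp: "AE x in G. 1 + \<gamma>\<^sub>0 * x > 0"
    unfolding G_def GEV_eq
    by (rule AE_density[THEN iffD2]) (measurable, auto simp: dens_def intro!: AE_I2)
  have AE12: "AE x in G. g1 x \<le> g2 x"
    using AEsupp by eventually_elim (use key(1)[OF s] in \<open>simp add: g1_def g2_def f_def f0_def q_def\<close>)
  have I1: "(\<integral>\<^sup>+ x. g1 x \<partial>G) = P + N0 + 1"
    unfolding g1_def P_def N0_def
    by (subst nn_integral_add, simp add: G_def, simp add: G_def, subst nn_integral_add)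
       (auto simp: G_def GEV_UNIV)
  have I2: "(\<integral>\<^sup>+ x. g2 x \<partial>G) = P0 + N + Q"
    unfolding g2_def P0_def N_def Q_def
    by (subst nn_integral_add, simp add: G_def, simp add: G_def, subst nn_integral_add)
       (auto simp: G_def)
  have I12: "P + N0 + 1 \<le> P0 + N + Q"
    unfolding I1[symmetric] I2[symmetric] by (rule nn_integral_mono_AE[OF AE12])
  also have "\<dots> \<le> P0 + N + 1" using Q1 by (rule add_left_mono)
  finally have ineq: "P + N0 \<le> P0 + N" by (simp add: ennreal_add_left_cancel_le add.commute[of _ 1] add.assoc[symmetric])
  obtain pr where pr: "pr \<ge> 0" "P = ennreal pr" using Pf by (cases P) auto
  obtain p0r where p0r: "p0r \<ge> 0" "P0 = ennreal p0r" using P0f by (cases P0) auto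
  obtain n0r where n0r: "n0r \<ge> 0" "N0 = ennreal n0r" using N0f by (cases N0) auto
  have ext0: "ext_integral G f0 = ereal (p0r - n0r)" using E0 p0r n0r by simp
  have ident_part: "(\<gamma>, \<mu>, \<sigma>) = (\<gamma>\<^sub>0, 0, 1)" if eqn: "P + N0 = P0 + N" and Nf: "N \<noteq> top"
  proof -
    have I1f: "(\<integral>\<^sup>+ x. g1 x \<partial>G) \<noteq> top" unfolding I1 using Pf N0f by simp
    have I21: "(\<integral>\<^sup>+ x. g2 x \<partial>G) \<le> (\<integral>\<^sup>+ x. g1 x \<partial>G)"
      unfolding I1 I2 using Q1 eqn[symmetric] by (simp add: add_left_mono)
    have AE21: "AE x in G. g2 x \<le> g1 x"
    proof (rule ccontr)
      assume na: "\<not> (AE x in G. g2 x \<le> g1 x)"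
      have "(\<integral>\<^sup>+ x. g1 x \<partial>G) < (\<integral>\<^sup>+ x. g2 x \<partial>G)"
        by (rule nn_integral_less) (use I1f AE12 na in \<open>auto simp: G_def\<close>)
      with I21 show False by simp
    qed
    have "(\<integral>\<^sup>+ x. g1 x \<partial>G) = (\<integral>\<^sup>+ x. g2 x \<partial>G)"
      using I21 nn_integral_mono_AE[OF AE12] by simp
    then have "(P + N0) + 1 = (P + N0) + Q" unfolding I1 I2 eqn by (simp add: add.assoc)
    then have Qone: "Q = 1" using Pf N0f by (simp add: ennreal_add_left_cancel)
    have AEa: "AE x in lborel. x \<in> A \<longrightarrow> dth \<gamma> \<mu> \<sigma> x = dens \<gamma>\<^sub>0 x"
    proof -
      have "AE x in G. dth \<gamma> \<mu> \<sigma> x = dens \<gamma>\<^sub>0 x"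
        using AEsupp AE21 by eventually_elim (use key(2)[OF s] in \<open>simp add: g1_def g2_def f_def f0_def q_def\<close>)
      then have "AE x in lborel. 0 < ennreal (dens \<gamma>\<^sub>0 x) \<longrightarrow> dth \<gamma> \<mu> \<sigma> x = dens \<gamma>\<^sub>0 x"
        unfolding G_def GEV_eq by (rule AE_density[THEN iffD1, rotated]) measurable
      then show ?thesis by (auto simp: A_def elim!: AE_mp intro!: AE_I2)
    qed
    have split: "(\<integral>\<^sup>+ x. ennreal (dth \<gamma> \<mu> \<sigma> x) \<partial>lborel)
        = (\<integral>\<^sup>+ x. ennreal (dth \<gamma> \<mu> \<sigma> x) * indicator A x \<partial>lborel)
          + (\<integral>\<^sup>+ x. ennreal (dth \<gamma> \<mu> \<sigma> x) * indicator (- A) x \<partial>lborel)"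
      by (subst nn_integral_add[symmetric]) (auto intro!: nn_integral_cong split: split_indicator)
    then have "1 + (\<integral>\<^sup>+ x. ennreal (dth \<gamma> \<mu> \<sigma> x) * indicator (- A) x \<partial>lborel) = 1 + 0"
      using dth_int1[OF s] Qone Qeq by simp
    then have "(\<integral>\<^sup>+ x. ennreal (dth \<gamma> \<mu> \<sigma> x) * indicator (- A) x \<partial>lborel) = 0"
      by (simp add: ennreal_add_left_cancel)
    then have AEb: "AE x in lborel. ennreal (dth \<gamma> \<mu> \<sigma> x) * indicator (- A) x = 0"
      by (subst (asm) nn_integral_0_iff_AE) auto
    have AEeq: "AE x in lborel. dth \<gamma> \<mu> \<sigma> x = dens \<gamma>\<^sub>0 x"
      using AEa AEb
    proof eventually_elim
      case (elim x)
      show ?case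
      proof (cases "x \<in> A")
        case True then show ?thesis using elim by simp
      next
        case False
        then have "ennreal (dth \<gamma> \<mu> \<sigma> x) = 0" using elim by simp
        then have "dth \<gamma> \<mu> \<sigma> x = 0" using dth_nonneg[OF s, of \<gamma> \<mu> x] by simp
        moreover have "dens \<gamma>\<^sub>0 x = 0" using False dens_nonneg[of \<gamma>\<^sub>0 x] by (simp add: A_def)
        ultimately show ?thesis by simp
      qed
    qed
    have Feq: "Fth \<gamma> \<mu> \<sigma> b - Fth \<gamma> \<mu> \<sigma> a = gev_cdf \<gamma>\<^sub>0 b - gev_cdf \<gamma>\<^sub>0 a" if ab: "a \<le> b" for a b
    proof -
      have "ennreal (Fth \<gamma> \<mu> \<sigma> b - Fth \<gamma> \<mu> \<sigma> a) = (\<integral>\<^sup>+ x. ennreal (dth \<gamma> \<mu> \<sigma> x) * indicator {a<..b} x \<partial>lborel)"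
        using nn_Ioc_th[OF s ab] by simp
      also have "\<dots> = (\<integral>\<^sup>+ x. ennreal (dth \<gamma>\<^sub>0 0 1 x) * indicator {a<..b} x \<partial>lborel)"
        by (rule nn_integral_cong_AE) (use AEeq in \<open>eventually_elim, simp add: dth01\<close>)
      also have "\<dots> = ennreal (Fth \<gamma>\<^sub>0 0 1 b - Fth \<gamma>\<^sub>0 0 1 a)" using nn_Ioc_th[of 1 a b] ab by simp
      finally have "ennreal (Fth \<gamma> \<mu> \<sigma> b - Fth \<gamma> \<mu> \<sigma> a) = ennreal (gev_cdf \<gamma>\<^sub>0 b - gev_cdf \<gamma>\<^sub>0 a)"
        by (simp add: Fth01)
      moreover have "Fth \<gamma> \<mu> \<sigma> a \<le> Fth \<gamma> \<mu> \<sigma> b" using Fth_mono[OF s ab] .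
      moreover have "gev_cdf \<gamma>\<^sub>0 a \<le> gev_cdf \<gamma>\<^sub>0 b" using Fth_mono[of 1 a b \<gamma>\<^sub>0 0] ab by (simp add: Fth01)
      ultimately show ?thesis by (simp add: ennreal_inj)
    qed
    have Fall: "gev_cdf \<gamma> ((x - \<mu>) / \<sigma>) = gev_cdf \<gamma>\<^sub>0 x" for x
    proof -
      have l1: "((\<lambda>a. Fth \<gamma> \<mu> \<sigma> x - Fth \<gamma> \<mu> \<sigma> a) \<longlongrightarrow> Fth \<gamma> \<mu> \<sigma> x - 0) at_bot"
        by (intro tendsto_intros Fth_bot[OF s])
      have l2: "((\<lambda>a. gev_cdf \<gamma>\<^sub>0 x - gev_cdf \<gamma>\<^sub>0 a) \<longlongrightarrow> gev_cdf \<gamma>\<^sub>0 x - 0) at_bot"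
        by (intro tendsto_intros cdf_bot)
      have "eventually (\<lambda>a. Fth \<gamma> \<mu> \<sigma> x - Fth \<gamma> \<mu> \<sigma> a = gev_cdf \<gamma>\<^sub>0 x - gev_cdf \<gamma>\<^sub>0 a) at_bot"
        unfolding eventually_at_bot_linorder by (intro exI[of _ x] allI impI Feq)
      from Lim_transform_eventually[OF l1 this] l2
      have "Fth \<gamma> \<mu> \<sigma> x - 0 = gev_cdf \<gamma>\<^sub>0 x - 0" by (intro tendsto_unique) auto
      then show ?thesis by (simp add: Fth_def)
    qed
    from ident[OF s Fall] show ?thesis by simp
  qed
  show ?thesis
  proof (cases "N = top")
    case True
    have ext: "ext_integral G f = - \<infinity>" using E True pr by simp
    have ne: "(\<gamma>, \<mu>, \<sigma>) \<noteq> (\<gamma>\<^sub>0, 0, 1)"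
    proof
      assume "(\<gamma>, \<mu>, \<sigma>) = (\<gamma>\<^sub>0, 0, 1)"
      then have "N = N0" by (simp add: N_def N0_def f_def f0_def)
      with True N0f show False by simp
    qed
    show ?thesis using ext ext0 ne by (simp add: G_def f_def f0_def)
  next
    case False
    obtain nr where nr: "nr \<ge> 0" "N = ennreal nr" using False by (cases N) auto
    have ext: "ext_integral G f = ereal (pr - nr)" using E pr nr by simp
    have r: "pr + n0r \<le> p0r + nr"
      using ineq pr p0r n0r nr by (simp add: ennreal_plus[symmetric] del: ennreal_plus)
    have part1: "ext_integral G f \<le> ext_integral G f0" using ext ext0 r by simp
    have part2: "ext_integral G f = ext_integral G f0 \<longleftrightarrow> (\<gamma>, \<mu>, \<sigma>) = (\<gamma>\<^sub>0, 0, 1)"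
    proof
      assume "ext_integral G f = ext_integral G f0"
      then have "pr + n0r = p0r + nr" using ext ext0 by simp
      then have "P + N0 = P0 + N" using pr p0r n0r nr by (simp add: ennreal_plus[symmetric] del: ennreal_plus)
      from ident_part[OF this False] show "(\<gamma>, \<mu>, \<sigma>) = (\<gamma>\<^sub>0, 0, 1)" .
    next
      assume "(\<gamma>, \<mu>, \<sigma>) = (\<gamma>\<^sub>0, 0, 1)"
      then show "ext_integral G f = ext_integral G f0" by (simp add: f_def f0_def)
    qed
    show ?thesis using part1 part2 by (simp add: G_def f_def f0_def)
  qed
qed

end
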